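(* Let $s\ge 1$, $q=4^{2s}$, and let $\theta$ be the automorphism of $F_q$ given by $\theta(a)=a^{4^s}$. Let $n$ be an even positive integer, let $g(x)\in F_q[x;\theta]$ be a right divisor of $x^n-1$ in $F_q[x;\theta]$ whose degree $m$ is odd, and let $C=\langle g(x)\rangle$ be the skew cyclic code of length $n$ over $F_q$ it generates. If $g(x)$ is a $\theta$-palindromic polynomial, then $C$ is a reversible DNA code. Conversely, if $C$ is a reversible DNA code, then $C$ is generated by a $\theta$-palindromic polynomial.
   Context: $F_q[x;\theta]$ is the skew polynomial ring: polynomials $\sum a_ix^i$ with $a_i\in F_q$, usual addition, and multiplication determined by $xa=\theta(a)x$ for $a\in F_q$. A skew cyclic code of length $n$ is a linear code $C\subseteq F_q^n$ such that $(\theta(c_{n-1}),\theta(c_0),\ldots,\theta(c_{n-2}))\in C$ whenever $(c_0,\ldots,c_{n-1})\in C$; identifying $(c_0,\ldots,c_{n-1})$ with $c_0+c_1x+\dots+c_{n-1}x^{n-1}$, such codes are the left $F_q[x;\theta]$-submodules of $F_q[x;\theta]/(x^n-1)$, and $\langle g(x)\rangle$ denotes the left submodule generated by $g(x)$ (the generator need not be monic). A polynomial $f(x)=a_0+a_1x+\dots+a_tx^t$ of degree $t$ is palindromic if $a_i=a_{t-i}$ for all $i$, and $\theta$-palindromic if $a_i=\theta(a_{t-i})$ for all $i$. DNA correspondence: there is a fixed bijection $\tau:F_{4^{2s}}\to\{A,T,G,C\}^{2s}$ such that for every $\beta$, $\tau(\beta^{4^s})$ is the reverse of the string $\tau(\beta)$;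 it extends to $\phi:F_q^n\to\{A,T,G,C\}^{2sn}$ by concatenation. A code $C\subseteq F_q^n$ is a reversible DNA code if the reverse string $\phi(c)^r$ lies in $\phi(C)$ for all $c\in C$; equivalently, $(\theta(c_{n-1}),\ldots,\theta(c_1),\theta(c_0))\in C$ for every $(c_0,\ldots,c_{n-1})\in C$. *)

theory Defs
  imports "HOL-Computational_Algebra.Polynomial"
begin

text \<open>Skew polynomial ring F[x;theta]: elements are represented by ordinary
  coefficient polynomials (type 'a poly); addition is the usual one, and
  multiplication is determined by x a = theta(a) x, i.e.
  (sum a_i x^i)(sum b_j x^j) = sum a_i theta^i(b_j) x^(i+j).\<close>

definition skew_mult :: "('a::comm_ring_1 \<Rightarrow> 'a) \<Rightarrow> 'a poly \<Rightarrow> 'a poly \<Rightarrow> 'a poly" where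
  "skew_mult \<theta> p r =
     (\<Sum>i\<le>degree p. \<Sum>j\<le>degree r. monom (coeff p i * (\<theta> ^^ i) (coeff r j)) (i + j))"

definition skew_right_dvd :: "('a::comm_ring_1 \<Rightarrow> 'a) \<Rightarrow> 'a poly \<Rightarrow> 'a poly \<Rightarrow> bool" where
  "skew_right_dvd \<theta> g f \<longleftrightarrow> (\<exists>h. f = skew_mult \<theta> h g)"

definition xn_minus_1 :: "nat \<Rightarrow> 'a::comm_ring_1 poly" where
  "xn_minus_1 n = monom 1 n - 1"

text \<open>Canonical representative in F[x;theta]/(x^n-1) (degree < n), as a vector
  (c_0,...,c_(n-1)) of length n. Since x^i - x^(i mod n) lies in the left ideal
  generated by x^n - 1, the coefficient of x^k is the sum of the coefficients of
  x^i with i mod n = k.\<close>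
definition reduce_vec :: "nat \<Rightarrow> 'a::comm_ring_1 poly \<Rightarrow> 'a list" where
  "reduce_vec n p = map (\<lambda>k. \<Sum>i\<in>{i. i \<le> degree p \<and> i mod n = k}. coeff p i) [0..<n]"

definition skew_code :: "('a::comm_ring_1 \<Rightarrow> 'a) \<Rightarrow> nat \<Rightarrow> 'a poly \<Rightarrow> 'a list set" where
  "skew_code \<theta> n g = {reduce_vec n (skew_mult \<theta> f g) | f. True}"

definition theta_palindromic :: "('a::zero \<Rightarrow> 'a) \<Rightarrow> 'a poly \<Rightarrow> bool" where
  "theta_palindromic \<theta> p \<longleftrightarrow> p \<noteq> 0 \<and>
     (\<forall>i\<le>degree p. coeff p i = \<theta> (coeff p (degree p - i)))"

text \<open>Reversible DNA code (equivalent form from the context):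
  (theta(c_(n-1)),...,theta(c_0)) \<in> C for all (c_0,...,c_(n-1)) \<in> C.\<close>
definition reversible_DNA :: "('a \<Rightarrow> 'a) \<Rightarrow> 'a list set \<Rightarrow> bool" where
  "reversible_DNA \<theta> C \<longleftrightarrow> (\<forall>c\<in>C. map \<theta> (rev c) \<in> C)"

end

theory Submission
  imports Defs
begin


definition mk :: "nat \<Rightarrow> (nat \<Rightarrow> 'a::comm_ring_1) \<Rightarrow> 'a poly" where
  "mk N c = (\<Sum>i\<le>N. monom (c i) i)"

lemma coeff_mk: "coeff (mk N c) k = (if k \<le> N then c k else 0)"
  unfolding mk_def by (simp add: coeff_sum coeff_monom)

lemma degree_mk: "degree (mk N c) \<le> N"
  by (rule degree_le) (simp add: coeff_mk)

locale invol =
  fixes th :: "'a::field \<Rightarrow> 'a"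
  assumes th_add: "th (a + b) = th a + th b"
    and th_mul: "th (a * b) = th a * th b"
    and th_inv: "th (th a) = a"
begin

lemma th0[simp]: "th 0 = 0"
  using th_add[of 0 0] by (metis add_cancel_right_right add_0)

lemma th_pow: "(th ^^ i) = (if even i then id else th)"
  by (induction i) (auto simp: th_inv fun_eq_iff)

lemma thp0[simp]: "(th ^^ i) 0 = 0"
  by (simp add: th_pow)

lemma thp_mul: "(th ^^ i) (a * b) = (th ^^ i) a * (th ^^ i) b"
  by (simp add: th_pow th_mul)

lemma thp_add: "(th ^^ i) (a + b) = (th ^^ i) a + (th ^^ i) b"
  by (simp add: th_pow th_add)

lemma th_sum: "th (sum f A) = sum (\<lambda>x. th (f x)) A"
  by (induction A rule: infinite_finite_induct) (auto simp: th_add)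

lemma thp_sum: "(th ^^ i) (sum f A) = sum (\<lambda>x. (th ^^ i) (f x)) A"
  by (simp add: th_pow th_sum)

lemma th_diff: "th (a - b) = th a - th b"
  using th_add[of "a - b" b] by simp

lemma th1[simp]: "th 1 = 1"
proof -
  have "th 1 * th 1 = th 1" using th_mul[of 1 1] by simp
  moreover have "th 1 \<noteq> 0" using th_inv[of 1] by auto
  ultimately show ?thesis by (metis mult_cancel_left1)
qed

lemma th_eq0[simp]: "th a = 0 \<longleftrightarrow> a = 0"
  by (metis th0 th_inv)

lemma thp_eq0[simp]: "(th ^^ i) a = 0 \<longleftrightarrow> a = 0"
  by (simp add: th_pow)

lemma thp_parity: "even (i + j) \<Longrightarrow> (th ^^ i) = (th ^^ j)"
  by (simp add: th_pow)

lemma coeff_skew: "coeff (skew_mult th p r) k = (\<Sum>i\<le>k. coeff p i * (th ^^ i) (coeff r (k - i)))"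
proof -
  define T where "T i = coeff p i * (th ^^ i) (coeff r (k - i))" for i
  have "coeff (skew_mult th p r) k =
     (\<Sum>i\<le>degree p. \<Sum>j\<le>degree r. if i + j = k then coeff p i * (th ^^ i) (coeff r j) else 0)"
    unfolding skew_mult_def by (simp add: coeff_sum coeff_monom)
  also have "\<dots> = (\<Sum>i\<le>degree p. if i \<le> k then T i else 0)"
  proof (rule sum.cong[OF refl])
    fix i
    have "(\<Sum>j\<le>degree r. if i + j = k then coeff p i * (th ^^ i) (coeff r j) else 0)
        = (\<Sum>j\<le>degree r. if j = k - i then (if i \<le> k then T i else 0) else 0)"
      by (rule sum.cong) (auto simp: T_def)
    also have "\<dots> = (if k - i \<in> {..degree r} then (if i \<le> k then T i else 0) else 0)"
      using sum.delta[of "{..degree r}" "k - i" "\<lambda>_. if i \<le> k then T i else 0"] by simp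
    also have "\<dots> = (if i \<le> k then T i else 0)"
      by (auto simp: T_def coeff_eq_0)
    finally show "(\<Sum>j\<le>degree r. if i + j = k then coeff p i * (th ^^ i) (coeff r j) else 0) = \<dots>" .
  qed
  also have "\<dots> = (\<Sum>i\<in>{i\<in>{..degree p}. i \<le> k}. T i)"
    by (rule sum.inter_filter[symmetric]) simp
  also have "\<dots> = (\<Sum>i\<le>k. T i)"
    by (rule sum.mono_neutral_left) (auto simp: coeff_eq_0 T_def le_degree)
  finally show ?thesis by (simp add: T_def)
qed


lemma skew_add_left: "skew_mult th (a + b) r = skew_mult th a r + skew_mult th b r"
  by (rule poly_eqI) (simp add: coeff_skew distrib_right sum.distrib)

lemma skew_add_right: "skew_mult th p (a + b) = skew_mult th p a + skew_mult th p b"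
  by (rule poly_eqI) (simp add: coeff_skew thp_add distrib_left sum.distrib)

lemma skew_zero_right[simp]: "skew_mult th p 0 = 0"
  by (rule poly_eqI) (simp add: coeff_skew)

lemma skew_diff_right: "skew_mult th p (a - b) = skew_mult th p a - skew_mult th p b"
  using skew_add_right[of p "a - b" b] by (simp add: eq_diff_eq)
lemma skew_zero_left[simp]: "skew_mult th 0 r = 0"
  by (rule poly_eqI) (simp add: coeff_skew)

lemma skew_one_left[simp]: "skew_mult th 1 r = r"
  by (rule poly_eqI) (simp add: coeff_skew)

lemma coeff_skew_monom: "coeff (skew_mult th (monom c j) p) k = (if j \<le> k then c * (th ^^ j) (coeff p (k - j)) else 0)"
proof -
  have "coeff (skew_mult th (monom c j) p) k = (\<Sum>i\<le>k. (if j = i then c else 0) * (th ^^ i) (coeff p (k - i)))"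
    by (simp add: coeff_skew coeff_monom)
  also have "\<dots> = (\<Sum>i\<le>k. if i = j then c * (th ^^ i) (coeff p (k - i)) else 0)"
    by (rule sum.cong) auto
  also have "\<dots> = (if j \<le> k then c * (th ^^ j) (coeff p (k - j)) else 0)"
    using sum.delta[of "{..k}" j "\<lambda>i. c * (th ^^ i) (coeff p (k - i))"] by auto
  finally show ?thesis .
qed

lemma skew_assoc: "skew_mult th (skew_mult th p q) r = skew_mult th p (skew_mult th q r)"
proof (rule poly_eqI)
  fix k
  define g where "g i j = coeff p i * (th ^^ i) (coeff q j) * (th ^^ (i + j)) (coeff r (k - (i + j)))" for i j
  have "coeff (skew_mult th (skew_mult th p q) r) k
      = (\<Sum>t\<le>k. \<Sum>i\<le>t. g i (t - i))"
    by (simp add: coeff_skew sum_distrib_right g_def)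
  also have "\<dots> = (\<Sum>(i,j)\<in>{(i,j). i + j \<le> k}. g i j)"
    by (rule sum.triangle_reindex_eq[symmetric])
  also have "\<dots> = (\<Sum>(i,j)\<in>Sigma {..k} (\<lambda>i. {..k - i}). g i j)"
    by (rule sum.cong) auto
  also have "\<dots> = (\<Sum>i\<le>k. \<Sum>j\<le>k - i. g i j)"
    by (rule sum.Sigma[symmetric]) auto
  also have "\<dots> = coeff (skew_mult th p (skew_mult th q r)) k"
    by (simp add: coeff_skew g_def thp_sum thp_mul sum_distrib_left funpow_add mult.assoc)
  finally show "coeff (skew_mult th (skew_mult th p q) r) k = coeff (skew_mult th p (skew_mult th q r)) k" .
qed

lemma coeff_skew_high:
  assumes "k > degree p + degree r"
  shows "coeff (skew_mult th p r) k = 0"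
  unfolding coeff_skew
proof (rule sum.neutral, rule ballI)
  fix i assume "i \<in> {..k}"
  show "coeff p i * (th ^^ i) (coeff r (k - i)) = 0"
  proof (cases "i \<le> degree p")
    case True
    then have "k - i > degree r" using assms by linarith
    then show ?thesis by (simp add: coeff_eq_0)
  next
    case False
    then show ?thesis by (simp add: coeff_eq_0)
  qed
qed

lemma coeff_skew_top:
  "coeff (skew_mult th p r) (degree p + degree r) = lead_coeff p * (th ^^ degree p) (lead_coeff r)"
proof -
  have "coeff (skew_mult th p r) (degree p + degree r) =
     (\<Sum>i\<in>{degree p}. coeff p i * (th ^^ i) (coeff r (degree p + degree r - i)))"
    unfolding coeff_skew
  proof (rule sum.mono_neutral_right)
    show "\<forall>i\<in>{..degree p + degree r} - {degree p}. coeff p i * (th ^^ i) (coeff r (degree p + degree r - i)) = 0"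
    proof
      fix i assume i: "i \<in> {..degree p + degree r} - {degree p}"
      show "coeff p i * (th ^^ i) (coeff r (degree p + degree r - i)) = 0"
      proof (cases "i < degree p")
        case True
        then have "degree p + degree r - i > degree r" by linarith
        then show ?thesis by (simp add: coeff_eq_0)
      next
        case False
        then have "i > degree p" using i by auto
        then show ?thesis by (simp add: coeff_eq_0)
      qed
    qed
  qed auto
  then show ?thesis by simp
qed

lemma degree_skew:
  assumes "p \<noteq> 0" "r \<noteq> 0"
  shows "degree (skew_mult th p r) = degree p + degree r"
proof (rule antisym)
  show "degree (skew_mult th p r) \<le> degree p + degree r"
    by (rule degree_le) (auto intro: coeff_skew_high)
  show "degree p + degree r \<le> degree (skew_mult th p r)"
    by (rule le_degree) (use assms in \<open>simp add: coeff_skew_top\<close>)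
qed

lemma skew_nonzero:
  assumes "p \<noteq> 0" "r \<noteq> 0"
  shows "skew_mult th p r \<noteq> 0"
proof
  assume "skew_mult th p r = 0"
  then have "coeff (skew_mult th p r) (degree p + degree r) = 0" by simp
  then show False using assms by (simp add: coeff_skew_top)
qed

lemma skew_div:
  assumes "h \<noteq> 0"
  shows "\<exists>q r. f = skew_mult th q h + r \<and> (r = 0 \<or> degree r < degree h)"
proof (induction "degree f" arbitrary: f rule: less_induct)
  case less
  show ?case
  proof (cases "f = 0 \<or> degree f < degree h")
    case True
    then show ?thesis by (intro exI[of _ 0] exI[of _ f]) auto
  next
    case False
    define d where "d = degree f"
    define e where "e = degree h"
    have ed: "e \<le> d" "f \<noteq> 0" using False d_def e_def by auto
    define c where "c = lead_coeff f / (th ^^ (d - e)) (lead_coeff h)"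
    define f' where "f' = f - skew_mult th (monom c (d - e)) h"
    have lh: "(th ^^ (d - e)) (lead_coeff h) \<noteq> 0" using assms by simp
    have cf: "coeff f' k = 0" if "k \<ge> d" for k
    proof (cases "k = d")
      case True
      then show ?thesis using ed lh
        by (simp add: f'_def coeff_skew_monom c_def d_def e_def)
    next
      case False
      then have "k > d" using that by auto
      then show ?thesis using ed
        by (simp add: f'_def coeff_skew_monom coeff_eq_0 d_def e_def)
    qed
    have "f' = 0 \<or> degree f' < d"
    proof (rule ccontr)
      assume "\<not> (f' = 0 \<or> degree f' < d)"
      then have "f' \<noteq> 0" "degree f' \<ge> d" by auto
      then show False using cf[of "degree f'"] by simp
    qed
    then obtain q r where qr: "f' = skew_mult th q h + r" "r = 0 \<or> degree r < degree h"
    proof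
      assume "f' = 0"
      then show ?thesis using that[of 0 0] assms by auto
    next
      assume "degree f' < d"
      then show ?thesis using less[of f'] that d_def by blast
    qed
    have "f = skew_mult th (q + monom c (d - e)) h + r"
      using qr(1) by (simp add: f'_def skew_add_left algebra_simps)
    then show ?thesis using qr(2) by blast
  qed
qed
definition rv :: "nat \<Rightarrow> 'a poly \<Rightarrow> 'a poly" where
  "rv d p = mk d (\<lambda>i. th (coeff p (d - i)))"

lemma coeff_rv: "coeff (rv d p) k = (if k \<le> d then th (coeff p (d - k)) else 0)"
  by (simp add: rv_def coeff_mk)

lemma degree_rv: "degree (rv d p) \<le> d"
  by (simp add: rv_def degree_mk)

lemma rv_rv: "degree p \<le> d \<Longrightarrow> rv d (rv d p) = p"
  by (rule poly_eqI) (auto simp: coeff_rv th_inv coeff_eq_0)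

lemma rv_add: "rv d (p + q) = rv d p + rv d q"
  by (rule poly_eqI) (simp add: coeff_rv th_add)

lemma rv_smult: "rv d (smult c p) = smult (th c) (rv d p)"
  by (rule poly_eqI) (simp add: coeff_rv th_mul)

lemma palin_iff: "p \<noteq> 0 \<Longrightarrow> theta_palindromic th p \<longleftrightarrow> rv (degree p) p = p"
  unfolding theta_palindromic_def
proof safe
  assume h: "\<forall>i\<le>degree p. coeff p i = th (coeff p (degree p - i))"
  show "rv (degree p) p = p"
  proof (rule poly_eqI)
    fix k
    show "coeff (rv (degree p) p) k = coeff p k"
    proof (cases "k \<le> degree p")
      case True
      have hk: "coeff p k = th (coeff p (degree p - k))" using h True by blast
      have "coeff (rv (degree p) p) k = th (coeff p (degree p - k))" using True by (simp add: coeff_rv)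
      then show ?thesis using hk by simp
    next
      case False
      then show ?thesis by (simp add: coeff_rv coeff_eq_0)
    qed
  qed
next
  fix i assume eq: "rv (degree p) p = p" and i: "i \<le> degree p"
  have "coeff p i = coeff (rv (degree p) p) i" by (subst eq) (rule refl)
  also have "\<dots> = th (coeff p (degree p - i))" using i by (simp add: coeff_rv)
  finally show "coeff p i = th (coeff p (degree p - i))" .
qed

lemma rv_prod:
  assumes "degree f \<le> D" "degree g \<le> m" "even D"
  shows "rv (D + m) (skew_mult th f g) = skew_mult th (rv D f) (rv m g)"
proof (rule poly_eqI)
  fix k
  show "coeff (rv (D + m) (skew_mult th f g)) k = coeff (skew_mult th (rv D f) (rv m g)) k"
  proof (cases "k \<le> D + m")
    case False
    have "coeff (skew_mult th (rv D f) (rv m g)) k = 0"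
      unfolding coeff_skew
    proof (rule sum.neutral, rule ballI)
      fix u assume "u \<in> {..k}"
      show "coeff (rv D f) u * (th ^^ u) (coeff (rv m g) (k - u)) = 0"
        using False by (cases "u \<le> D") (auto simp: coeff_rv)
    qed
    then show ?thesis using False by (simp add: coeff_rv)
  next
    case True
    note kle = True
    define t where "t = D + m - k"
    have "coeff (rv (D + m) (skew_mult th f g)) k
        = (\<Sum>i\<le>t. th (coeff f i) * (th ^^ Suc i) (coeff g (t - i)))"
      using True by (simp add: coeff_rv coeff_skew th_sum th_mul t_def)
    also have "\<dots> = (\<Sum>i\<in>{i. i \<le> t \<and> i \<le> D \<and> t - i \<le> m}. th (coeff f i) * (th ^^ Suc i) (coeff g (t - i)))"
    proof (rule sum.mono_neutral_right)
      show "\<forall>i\<in>{..t} - {i. i \<le> t \<and> i \<le> D \<and> t - i \<le> m}. th (coeff f i) * (th ^^ Suc i) (coeff g (t - i)) = 0"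
      proof
        fix i assume "i \<in> {..t} - {i. i \<le> t \<and> i \<le> D \<and> t - i \<le> m}"
        then have "i > D \<or> t - i > m" by auto
        then show "th (coeff f i) * (th ^^ Suc i) (coeff g (t - i)) = 0"
        proof
          assume "i > D" then have "coeff f i = 0" using assms(1) by (simp add: coeff_eq_0)
          then show ?thesis by simp
        next
          assume "t - i > m" then have "coeff g (t - i) = 0" using assms(2) by (simp add: coeff_eq_0)
          then show ?thesis by (simp del: funpow.simps)
        qed
      qed
    qed auto
    also have "\<dots> = (\<Sum>u\<le>k. coeff (rv D f) u * (th ^^ u) (coeff (rv m g) (k - u)))"
    proof (rule sum.reindex_bij_witness_not_neutral[where ?S'="{}"
          and ?T'="{u. u \<le> k \<and> \<not> (u \<le> D \<and> k - u \<le> m)}" and ?i="\<lambda>u. D - u" and ?j="\<lambda>i. D - i"])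
      fix u assume "u \<in> {u. u \<le> k \<and> \<not> (u \<le> D \<and> k - u \<le> m)}"
      then show "coeff (rv D f) u * (th ^^ u) (coeff (rv m g) (k - u)) = 0"
        by (auto simp: coeff_rv)
    next
      fix i assume i: "i \<in> {i. i \<le> t \<and> i \<le> D \<and> t - i \<le> m}"
      have e1: "m - (k - (D - i)) = t - i" using i t_def kle by auto
      have e2: "k - (D - i) \<le> m" using i t_def kle by auto
      have "(th ^^ (D - i)) (th x) = (th ^^ Suc i) x" for x
      proof -
        have "(th ^^ (D - i)) (th x) = (th ^^ Suc (D - i)) x" by (simp add: funpow_swap1)
        also have "\<dots> = (th ^^ Suc i) x"
          using thp_parity[of "Suc (D - i)" "Suc i"] i assms(3) by simp
        finally show ?thesis .
      qed
      then show "coeff (rv D f) (D - i) * (th ^^ (D - i)) (coeff (rv m g) (k - (D - i))) =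
            th (coeff f i) * (th ^^ Suc i) (coeff g (t - i))"
        using i e1 e2 by (simp add: coeff_rv)
    qed (use kle t_def in auto)
    also have "\<dots> = coeff (skew_mult th (rv D f) (rv m g)) k"
      by (simp add: coeff_skew)
    finally show ?thesis .
  qed
qed

end
definition rs :: "nat \<Rightarrow> nat \<Rightarrow> 'a::comm_ring_1 poly \<Rightarrow> nat \<Rightarrow> 'a" where
  "rs n N p k = (\<Sum>i\<in>{i. i \<le> N \<and> i mod n = k}. coeff p i)"

lemma fin_rs_set: "finite {i::nat. i \<le> N \<and> i mod n = k}"
  by (rule finite_subset[of _ "{..N}"]) auto

lemma rs_indep:
  assumes "degree p \<le> N" "degree p \<le> M"
  shows "rs n N p k = rs n M p k"
proof -
  have "rs n N p k = (\<Sum>i\<in>{i. i \<le> degree p \<and> i mod n = k}. coeff p i)"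
    unfolding rs_def
    by (rule sum.mono_neutral_right) (use assms fin_rs_set in \<open>auto simp: coeff_eq_0 le_degree\<close>)
  also have "\<dots> = rs n M p k"
    unfolding rs_def
    by (rule sum.mono_neutral_left) (use assms fin_rs_set in \<open>auto simp: coeff_eq_0 le_degree\<close>)
  finally show ?thesis .
qed

lemma reduce_rs: "degree p \<le> N \<Longrightarrow> reduce_vec n p = map (rs n N p) [0..<n]"
  unfolding reduce_vec_def
  using rs_indep[of p "degree p" N n] by (simp add: rs_def)

lemma rs_diff: "rs n N (p - q) k = rs n N p k - rs n N q k"
  by (simp add: rs_def sum_subtractf)

lemma rs_add: "rs n N (p + q) k = rs n N p k + rs n N q k"
  by (simp add: rs_def sum.distrib)

lemma rs_shift:
  assumes "n > 0"
  shows "rs n (N + n) (monom 1 n * q) k = rs n N q k"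
proof -
  have "rs n (N + n) (monom 1 n * q) k = (\<Sum>i\<in>{i. n \<le> i \<and> i \<le> N + n \<and> i mod n = k}. coeff (monom 1 n * q) i)"
    unfolding rs_def
    by (rule sum.mono_neutral_right) (use fin_rs_set in \<open>auto simp: coeff_monom_mult\<close>)
  also have "\<dots> = rs n N q k"
    unfolding rs_def
    by (rule sum.reindex_bij_witness[where i="\<lambda>j. j + n" and j="\<lambda>i. i - n"])
       (auto simp: coeff_monom_mult le_diff_conv le_mod_geq)
  finally show ?thesis .
qed

lemma reduce_zero:
  assumes "n > 0"
  shows "reduce_vec n ((monom 1 n - 1) * q) = replicate n 0"
proof -
  have deg: "degree ((monom 1 n - 1) * q) \<le> degree q + n"
    by (rule order_trans[OF degree_mult_le]) (auto intro: order_trans[OF degree_diff_le] simp: degree_monom_eq)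
  have "reduce_vec n ((monom 1 n - 1) * q) = map (rs n (degree q + n) ((monom 1 n - 1) * q)) [0..<n]"
    by (rule reduce_rs[OF deg])
  also have "\<dots> = map (\<lambda>k. 0) [0..<n]"
  proof (rule map_cong[OF refl])
    fix k
    have "rs n (degree q + n) ((monom 1 n - 1) * q) k = rs n (degree q + n) (monom 1 n * q) k - rs n (degree q + n) q k"
      by (simp add: algebra_simps rs_diff)
    also have "\<dots> = rs n (degree q) q k - rs n (degree q + n) q k"
      using rs_shift[OF assms] by simp
    also have "\<dots> = 0" using rs_indep[of q "degree q" "degree q + n" n k] by simp
    finally show "rs n (degree q + n) ((monom 1 n - 1) * q) k = 0" .
  qed
  finally show ?thesis by (simp add: map_replicate_const)
qed

lemma reduce_small:
  assumes "degree p < n"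
  shows "reduce_vec n p = map (coeff p) [0..<n]"
proof -
  have "reduce_vec n p = map (rs n (n - 1) p) [0..<n]"
    by (rule reduce_rs) (use assms in auto)
  also have "\<dots> = map (coeff p) [0..<n]"
  proof (rule map_cong[OF refl])
    fix k assume "k \<in> set [0..<n]"
    then have k: "k < n" by simp
    have "{i. i \<le> n - 1 \<and> i mod n = k} = {k}"
      using k by auto
    then show "rs n (n - 1) p k = coeff p k" by (simp add: rs_def)
  qed
  finally show ?thesis .
qed

lemma reduce_inj:
  assumes "degree p < n" "degree q < n" "reduce_vec n p = reduce_vec n q"
  shows "p = q"
proof (rule poly_eqI)
  fix k
  show "coeff p k = coeff q k"
  proof (cases "k < n")
    case True
    have "map (coeff p) [0..<n] = map (coeff q) [0..<n]"
      using assms reduce_small by metis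
    then show ?thesis using True by (auto simp: map_eq_conv)
  next
    case False
    then show ?thesis using assms by (simp add: coeff_eq_0)
  qed
qed
lemma modrev:
  fixes n d i k :: nat
  assumes "0 < n" "d mod n = n - 1" "i \<le> d" "k < n"
  shows "(i mod n = k) = ((d - i) mod n = n - 1 - k)"
proof -
  define a where "a = i mod n"
  define b where "b = (d - i) mod n"
  have an: "a < n" "b < n" using assms(1) by (auto simp: a_def b_def)
  have "(a + b) mod n = (i + (d - i)) mod n" unfolding a_def b_def by (rule mod_add_eq)
  also have "i + (d - i) = d" using assms(3) by simp
  finally have ab: "(a + b) mod n = n - 1" using assms(2) by simp
  have "a + b = n - 1"
  proof (cases "a + b < n")
    case True
    then show ?thesis using ab by simp
  next
    case False
    then have "(a + b) mod n = a + b - n" using an by (simp add: le_mod_geq)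
    then show ?thesis using ab an by simp
  qed
  then show ?thesis unfolding a_def[symmetric] b_def[symmetric] using assms(4) by auto
qed

context invol begin

lemma skew_xn: "skew_mult th q (xn_minus_1 n) = (monom 1 n - 1) * q"
proof (rule poly_eqI)
  fix k
  have c1: "coeff (skew_mult th q 1) k = coeff q k"
  proof -
    have "coeff (skew_mult th q 1) k = (\<Sum>i\<le>k. if i = k then coeff q i else 0)"
      unfolding coeff_skew by (rule sum.cong) (auto simp: coeff_1 th_pow)
    then show ?thesis by simp
  qed
  have c2: "coeff (skew_mult th q (monom 1 n)) k = (if n \<le> k then coeff q (k - n) else 0)"
  proof -
    have "coeff (skew_mult th q (monom 1 n)) k = (\<Sum>i\<le>k. if i = k - n \<and> n \<le> k then coeff q i else 0)"
      unfolding coeff_skew by (rule sum.cong) (auto simp: coeff_monom th_pow)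
    also have "\<dots> = (if n \<le> k then coeff q (k - n) else 0)"
      by (cases "n \<le> k") auto
    finally show ?thesis .
  qed
  show "coeff (skew_mult th q (xn_minus_1 n)) k = coeff ((monom 1 n - 1) * q) k"
    unfolding xn_minus_1_def skew_diff_right
    by (simp add: c1 c2 left_diff_distrib coeff_monom_mult)
qed

lemma reduce_rev:
  assumes "0 < n" "degree p \<le> d" "d mod n = n - 1"
  shows "map th (rev (reduce_vec n p)) = reduce_vec n (rv d p)"
proof -
  have r1: "reduce_vec n p = map (rs n d p) [0..<n]" by (rule reduce_rs[OF assms(2)])
  have r2: "reduce_vec n (rv d p) = map (rs n d (rv d p)) [0..<n]" by (rule reduce_rs[OF degree_rv])
  show ?thesis unfolding r1 r2
  proof (rule nth_equalityI)
    show "length (map th (rev (map (rs n d p) [0..<n]))) = length (map (rs n d (rv d p)) [0..<n])" by simp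
    fix k assume "k < length (map th (rev (map (rs n d p) [0..<n])))"
    then have k: "k < n" by simp
    have lhs: "map th (rev (map (rs n d p) [0..<n])) ! k = th (rs n d p (n - 1 - k))"
      using k by (simp add: rev_nth)
    have "rs n d (rv d p) k = (\<Sum>i\<in>{i. i \<le> d \<and> i mod n = k}. th (coeff p (d - i)))"
      unfolding rs_def by (rule sum.cong) (auto simp: coeff_rv)
    also have "\<dots> = (\<Sum>j\<in>{j. j \<le> d \<and> j mod n = n - 1 - k}. th (coeff p j))"
      by (rule sum.reindex_bij_witness[where i="\<lambda>j. d - j" and j="\<lambda>i. d - i"])
         (use modrev[OF assms(1) assms(3) _ k] in auto)
    also have "\<dots> = th (rs n d p (n - 1 - k))"
      by (simp add: rs_def th_sum)
    finally show "map th (rev (map (rs n d p) [0..<n])) ! k = map (rs n d (rv d p)) [0..<n] ! k"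
      using lhs k by simp
  qed
qed

end
context invol begin

lemma degree_skew_le: "degree (skew_mult th p r) \<le> degree p + degree r"
  by (rule degree_le) (auto intro: coeff_skew_high)

lemma arith_D:
  fixes n a m :: nat
  assumes "0 < n" "even n" "odd m"
  defines "D \<equiv> n * (a + m + 1) - 1 - m"
  shows "a \<le> D" "even D" "(D + m) mod n = n - 1"
proof -
  define t where "t = a + m + 1"
  have t1: "t \<ge> 1" "t \<ge> a + m + 1" by (auto simp: t_def)
  have M: "n * t \<ge> t" using assms(1) by simp
  have DD: "D = n * t - (1 + m)" by (simp add: D_def t_def)
  show "a \<le> D" using M t1 DD by linarith
  have e1: "2 dvd (n * t)" using assms(2) by simp
  have e2: "2 dvd (1 + m)" using assms(3) by simp
  show "even D" unfolding DD by (rule dvd_diff_nat[OF e1 e2])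
  have "D + m = n * t - 1" using M t1 DD by linarith
  also have "n * t - 1 = n * (t - 1) + (n - 1)"
  proof -
    have "n * t = n * (t - 1) + n" using t1 by (metis add.commute le_add_diff_inverse mult_Suc_right plus_1_eq_Suc)
    then show ?thesis using assms(1) by linarith
  qed
  finally have DM: "D + m = n * (t - 1) + (n - 1)" .
  have "(n * (t - 1) + (n - 1)) mod n = (n - 1) mod n" by (rule mod_mult_self4)
  also have "\<dots> = n - 1" using assms(1) by simp
  finally show "(D + m) mod n = n - 1" unfolding DM .
qed

lemma forward:
  assumes n: "0 < n" "even n" and m: "odd (degree g)" and pal: "theta_palindromic th g"
  shows "reversible_DNA th (skew_code th n g)"
  unfolding reversible_DNA_def
proof
  fix c assume "c \<in> skew_code th n g"
  then obtain f where c: "c = reduce_vec n (skew_mult th f g)" by (auto simp: skew_code_def)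
  define m where "m = degree g"
  define D where "D = n * (degree f + m + 1) - 1 - m"
  have D: "degree f \<le> D" "even D" "(D + m) mod n = n - 1"
    using arith_D[OF n, of m "degree f"] m by (auto simp: D_def m_def)
  have g0: "g \<noteq> 0" using pal by (simp add: theta_palindromic_def)
  have gpal: "rv m g = g" using palin_iff[OF g0] pal by (simp add: m_def)
  have deg: "degree (skew_mult th f g) \<le> D + m"
    using degree_skew_le[of f g] D(1) by (simp add: m_def)
  have "map th (rev c) = reduce_vec n (rv (D + m) (skew_mult th f g))"
    unfolding c by (rule reduce_rev[OF n(1) deg D(3)])
  also have "\<dots> = reduce_vec n (skew_mult th (rv D f) (rv m g))"
    using rv_prod[OF D(1) _ D(2), of g m] by (simp add: m_def)
  also have "\<dots> = reduce_vec n (skew_mult th (rv D f) g)" using gpal by simp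
  finally show "map th (rev c) \<in> skew_code th n g" by (auto simp: skew_code_def)
qed

end
context invol begin

lemma reduce_add_zero:
  assumes "reduce_vec n A = replicate n 0"
  shows "reduce_vec n (A + B) = reduce_vec n B"
proof -
  define N where "N = degree A + degree B"
  have dA: "degree A \<le> N" and dB: "degree B \<le> N" and dAB: "degree (A + B) \<le> N"
    using degree_add_le_max[of A B] by (auto simp: N_def)
  have z: "rs n N A k = 0" if "k < n" for k
  proof -
    have "map (rs n N A) [0..<n] = replicate n 0" using assms reduce_rs[OF dA] by simp
    then have "map (rs n N A) [0..<n] ! k = replicate n 0 ! k" by simp
    then show ?thesis using that by simp
  qed
  show ?thesis
    unfolding reduce_rs[OF dAB] reduce_rs[OF dB]
    by (rule map_cong[OF refl]) (simp add: rs_add z)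
qed

lemma skew_smult_right:
  "skew_mult th f (smult c g) = skew_mult th (mk (degree f) (\<lambda>i. coeff f i * (th ^^ i) c)) g"
proof (rule poly_eqI)
  fix k
  show "coeff (skew_mult th f (smult c g)) k = coeff (skew_mult th (mk (degree f) (\<lambda>i. coeff f i * (th ^^ i) c)) g) k"
    unfolding coeff_skew
  proof (rule sum.cong[OF refl])
    fix i
    show "coeff f i * (th ^^ i) (coeff (smult c g) (k - i)) =
          coeff (mk (degree f) (\<lambda>i. coeff f i * (th ^^ i) c)) i * (th ^^ i) (coeff g (k - i))"
      by (cases "i \<le> degree f") (auto simp: coeff_mk thp_mul coeff_eq_0 mult.assoc)
  qed
qed

lemma code_smult:
  assumes "c \<noteq> 0"
  shows "skew_code th n (smult c g) = skew_code th n g"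
proof
  show "skew_code th n (smult c g) \<subseteq> skew_code th n g"
    unfolding skew_code_def skew_smult_right by blast
  show "skew_code th n g \<subseteq> skew_code th n (smult c g)"
  proof
    fix x assume "x \<in> skew_code th n g"
    then obtain f where x: "x = reduce_vec n (skew_mult th f g)" by (auto simp: skew_code_def)
    define f' where "f' = mk (degree f) (\<lambda>i. coeff f i / (th ^^ i) c)"
    have "mk (degree f') (\<lambda>i. coeff f' i * (th ^^ i) c) = f"
    proof (rule poly_eqI)
      fix k
      have d: "degree f' \<le> degree f" by (simp add: f'_def degree_mk)
      show "coeff (mk (degree f') (\<lambda>i. coeff f' i * (th ^^ i) c)) k = coeff f k"
      proof (cases "k \<le> degree f'")
        case True
        then show ?thesis using assms d by (simp add: coeff_mk f'_def)
      next
        case False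
        then have "coeff f' k = 0" by (simp add: coeff_eq_0)
        have "coeff f k = 0"
        proof (cases "k \<le> degree f")
          case True
          then have "coeff f k / (th ^^ k) c = 0" using \<open>coeff f' k = 0\<close> by (simp add: f'_def coeff_mk)
          then show ?thesis using assms by simp
        next
          case False
          then show ?thesis by (simp add: coeff_eq_0)
        qed
        then show ?thesis using False by (simp add: coeff_mk)
      qed
    qed
    then have "skew_mult th f' (smult c g) = skew_mult th f g" by (simp add: skew_smult_right)
    then show "x \<in> skew_code th n (smult c g)" unfolding skew_code_def x by (auto intro!: exI[of _ f'])
  qed
qed

lemma rv_one: "coeff (rv D 1) k = (if k = D then 1 else 0)"
  by (auto simp: coeff_rv coeff_1)

lemma coeff_skew_rv1:
  assumes "even D"
  shows "coeff (skew_mult th (rv D 1) p) k = (if D \<le> k then coeff p (k - D) else 0)"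
proof -
  have "coeff (skew_mult th (rv D 1) p) k = (\<Sum>i\<le>k. if i = D then (th ^^ i) (coeff p (k - i)) else 0)"
    unfolding coeff_skew by (rule sum.cong) (auto simp: rv_one)
  also have "\<dots> = (if D \<le> k then (th ^^ D) (coeff p (k - D)) else 0)"
    by (cases "D \<le> k") auto
  finally show ?thesis using assms by (simp add: th_pow)
qed

lemma low_zero:
  assumes g0: "coeff g 0 \<noteq> 0" and low: "\<And>j. j < D \<Longrightarrow> coeff (skew_mult th r g) j = 0"
  shows "j < D \<Longrightarrow> coeff r j = 0"
proof (induction j rule: less_induct)
  case (less j)
  have "coeff (skew_mult th r g) j = (\<Sum>i\<le>j. coeff r i * (th ^^ i) (coeff g (j - i)))"
    by (rule coeff_skew)
  also have "\<dots> = (\<Sum>i\<in>{j}. coeff r i * (th ^^ i) (coeff g (j - i)))"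
    by (rule sum.mono_neutral_right) (use less in auto)
  also have "\<dots> = coeff r j * (th ^^ j) (coeff g 0)" by simp
  finally have "coeff r j * (th ^^ j) (coeff g 0) = 0" using low less(2) by simp
  then show ?case using g0 by simp
qed

lemma converse:
  assumes n: "0 < n" "even n" and m: "odd (degree g)"
    and dvd: "skew_right_dvd th g (xn_minus_1 n)"
    and rev: "reversible_DNA th (skew_code th n g)"
    and nid: "\<exists>x. th x \<noteq> x"
  shows "\<exists>g'. theta_palindromic th g' \<and> skew_code th n g' = skew_code th n g"
proof -
  define m where "m = degree g"
  obtain h where h: "xn_minus_1 n = skew_mult th h g" using dvd by (auto simp: skew_right_dvd_def)
  have g0: "g \<noteq> 0" using m by auto
  have xn0: "coeff (xn_minus_1 n :: 'a poly) 0 = - 1" using n by (simp add: xn_minus_1_def coeff_monom)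
  have "xn_minus_1 n \<noteq> (0 :: 'a poly)"
  proof
    assume "xn_minus_1 n = (0 :: 'a poly)"
    then have "coeff (xn_minus_1 n :: 'a poly) 0 = 0" by simp
    then have "(0::'a) = - 1" using xn0 by simp
    then show False by simp
  qed
  then have h0: "h \<noteq> 0" using h by auto
  have dxn: "degree (xn_minus_1 n :: 'a poly) = n"
  proof (rule antisym)
    show "degree (xn_minus_1 n :: 'a poly) \<le> n"
      by (rule degree_le) (auto simp: xn_minus_1_def coeff_monom coeff_1)
    show "n \<le> degree (xn_minus_1 n :: 'a poly)"
      by (rule le_degree) (use n in \<open>simp add: xn_minus_1_def coeff_monom coeff_1\<close>)
  qed
  have dh: "degree h + m = n" using degree_skew[OF h0 g0] h dxn by (simp add: m_def)
  have mn: "m < n" using dh m n(2) m_def by (metis add_cancel_right_left le_add2 le_neq_implies_less)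
  have gc0: "coeff g 0 \<noteq> 0"
  proof
    assume "coeff g 0 = 0"
    then have "coeff (skew_mult th h g) 0 = 0" by (simp add: coeff_skew)
    then show False using h xn0 by simp
  qed
  define D where "D = n - 1 - m"
  have Dm: "D + m = n - 1" using mn by (simp add: D_def)
  have De: "even D"
  proof -
    have "2 dvd n - (1 + m)" by (rule dvd_diff_nat) (use n m m_def in auto)
    then show ?thesis by (simp add: D_def)
  qed
  define gs where "gs = rv m g"
  define P where "P = skew_mult th (rv D 1) gs"
  have "reduce_vec n g \<in> skew_code th n g"
    unfolding skew_code_def by (auto intro!: exI[of _ 1])
  then have "map th (rev (reduce_vec n g)) \<in> skew_code th n g"
    using rev by (auto simp: reversible_DNA_def)
  moreover have "map th (rev (reduce_vec n g)) = reduce_vec n (rv (D + m) g)"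
    by (rule reduce_rev) (use n Dm m_def in auto)
  moreover have "rv (D + m) g = P"
    using rv_prod[of 1 D g m] De by (simp add: P_def gs_def m_def)
  ultimately obtain f where f: "reduce_vec n (skew_mult th f g) = reduce_vec n P"
    by (auto simp: skew_code_def)
  obtain q r where qr: "f = skew_mult th q h + r" "r = 0 \<or> degree r < degree h"
    using skew_div[OF h0] by blast
  have "skew_mult th f g = (monom 1 n - 1) * q + skew_mult th r g"
    unfolding qr(1) skew_add_left skew_assoc h[symmetric] skew_xn ..
  then have "reduce_vec n (skew_mult th f g) = reduce_vec n (skew_mult th r g)"
    using reduce_add_zero[OF reduce_zero[OF n(1)]] by simp
  then have red: "reduce_vec n (skew_mult th r g) = reduce_vec n P" using f by simp
  have dP: "degree P < n"
  proof -
    have "degree P \<le> degree (rv D 1) + degree gs" unfolding P_def by (rule degree_skew_le)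
    also have "\<dots> \<le> D + m" using degree_rv[of D 1] degree_rv[of m g] by (simp add: gs_def)
    finally show ?thesis using Dm n by linarith
  qed
  have drg: "degree (skew_mult th r g) < n"
  proof (cases "r = 0")
    case True then show ?thesis using n by simp
  next
    case False
    then have "degree r < degree h" using qr(2) by simp
    then show ?thesis using degree_skew[OF False g0] dh m_def by simp
  qed
  have rgP: "skew_mult th r g = P" by (rule reduce_inj[OF drg dP red])
  have cP: "coeff P k = (if D \<le> k then coeff gs (k - D) else 0)" for k
    unfolding P_def by (rule coeff_skew_rv1[OF De])
  have rlow: "coeff r j = 0" if "j < D" for j
    by (rule low_zero[OF gc0 _ that]) (simp add: rgP cP)
  have gsm: "coeff gs m = th (coeff g 0)" by (simp add: gs_def coeff_rv)
  have "P \<noteq> 0"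
  proof
    assume "P = 0"
    then have "coeff P (D + m) = 0" by simp
    then show False using cP[of "D + m"] gsm gc0 by simp
  qed
  then have r0: "r \<noteq> 0" using rgP by auto
  have "degree r + m \<le> D + m"
    using degree_skew[OF r0 g0] rgP dP Dm m_def n by simp
  then have drD: "degree r \<le> D" by simp
  have rmon: "r = monom (coeff r D) D"
  proof (rule poly_eqI)
    fix k show "coeff r k = coeff (monom (coeff r D) D) k"
      using rlow[of k] drD by (cases "k < D"; cases "k = D") (auto simp: coeff_monom coeff_eq_0)
  qed
  define c where "c = coeff r D"
  have gsc: "gs = smult c g"
  proof (rule poly_eqI)
    fix j
    have "coeff (skew_mult th r g) (j + D) = coeff P (j + D)" by (simp add: rgP)
    then show "coeff gs j = coeff (smult c g) j"
      using De by (subst (asm) rmon) (simp add: coeff_skew_monom cP c_def th_pow)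
  qed
  obtain \<beta> where beta: "\<beta> + th \<beta> * c \<noteq> 0"
  proof (cases "1 + c = 0")
    case False
    then show ?thesis using that[of 1] by simp
  next
    case True
    then have c1: "c = - 1" by (simp add: add_eq_0_iff)
    obtain x where "th x \<noteq> x" using nid by blast
    then show ?thesis using that[of x] c1 by simp
  qed
  define A where "A = smult \<beta> g"
  define g' where "g' = A + rv m A"
  have "rv m A = smult (th \<beta> * c) g"
    by (simp add: A_def rv_smult gs_def[symmetric] gsc)
  then have g'eq: "g' = smult (\<beta> + th \<beta> * c) g" by (simp add: g'_def A_def smult_add_left)
  have g'0: "g' \<noteq> 0" using g'eq beta g0 by simp
  have dg': "degree g' = m" using g'eq beta by (simp add: m_def)
  have dA: "degree A \<le> m" by (simp add: A_def m_def)
  have "rv m g' = g'"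
    unfolding g'_def rv_add rv_rv[OF dA] by (simp add: add.commute)
  then have "theta_palindromic th g'" using palin_iff[OF g'0] dg' by simp
  moreover have "skew_code th n g' = skew_code th n g"
    using g'eq code_smult[OF beta] by simp
  ultimately show ?thesis by blast
qed

end
lemma ff_power_card:
  fixes x :: "'a :: {field,finite}"
  shows "x ^ card (UNIV :: 'a set) = x"
proof (cases "x = 0")
  case False
  have "x * (\<Prod>y\<in>UNIV-{0}. x * y) = x * x ^ (card (UNIV :: 'a set) - 1) * \<Prod>(UNIV-{0})"
    by (simp add: prod.distrib mult_ac)
  also have "x * x ^ (card (UNIV :: 'a set) - 1) = x ^ Suc (card (UNIV :: 'a set) - 1)"
    by (subst power_Suc) auto
  also have "Suc (card (UNIV :: 'a set) - 1) = card (UNIV :: 'a set)"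
    using finite_UNIV_card_ge_0[where ?'a = 'a] by simp
  also have "(\<Prod>y\<in>UNIV-{0}. x * y) = (\<Prod>y\<in>UNIV-{0}. y)"
    by (rule prod.reindex_bij_witness[of _ "\<lambda>y. y / x" "\<lambda>y. x * y"]) (use False in auto)
  finally show ?thesis
    by simp
qed (use finite_UNIV_card_ge_0[where ?'a = 'a] in auto)

lemma char2:
  fixes dummy :: "'a :: {field,finite}"
  assumes "even (card (UNIV :: 'a set))"
  shows "(1::'a) + 1 = 0"
proof -
  have "(- 1 :: 'a) ^ card (UNIV :: 'a set) = - 1" by (rule ff_power_card)
  then have "(1::'a) = - 1" using assms by simp
  then show ?thesis by (metis add.right_inverse)
qed

lemma frob2:
  fixes a b :: "'a :: field"
  assumes "(1::'a) + 1 = 0"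
  shows "(a + b) ^ (2 ^ k) = a ^ (2 ^ k) + b ^ (2 ^ k)"
proof (induction k)
  case 0 then show ?case by simp
next
  case (Suc k)
  have two: "2 * (a * b) = 0" if "(1::'a) + 1 = 0" for a b :: 'a
  proof -
    have "2 * (a * b) = (1 + 1) * (a * b)" by simp
    then show ?thesis using that by simp
  qed
  have sq: "(x + y) ^ 2 = x ^ 2 + y ^ 2" for x y :: 'a
    using two[OF assms, of x y] by (simp add: power2_sum)
  have "(a + b) ^ (2 ^ Suc k) = ((a + b) ^ (2 ^ k)) ^ 2" by (simp add: power_mult[symmetric] mult.commute)
  also have "\<dots> = (a ^ (2 ^ k)) ^ 2 + (b ^ (2 ^ k)) ^ 2" by (simp add: Suc sq)
  also have "\<dots> = a ^ (2 ^ Suc k) + b ^ (2 ^ Suc k)" by (simp add: power_mult[symmetric] mult.commute)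
  finally show ?case .
qed

lemma theta_invol:
  fixes dummy :: "'a :: {field,finite}"
  assumes card: "card (UNIV :: 'a set) = 4 ^ (2 * s)" and s: "s \<ge> 1"
  shows "invol (\<lambda>a::'a. a ^ (4 ^ s))"
proof
  have ev: "even (card (UNIV :: 'a set))" using card s by simp
  have c2: "(1::'a) + 1 = 0" by (rule char2[OF ev])
  have Q: "(4::nat) ^ s = 2 ^ (2 * s)" by (simp add: power_mult)
  fix a b :: 'a
  show "(a + b) ^ 4 ^ s = a ^ 4 ^ s + b ^ 4 ^ s" unfolding Q by (rule frob2[OF c2])
  show "(a * b) ^ 4 ^ s = a ^ 4 ^ s * b ^ 4 ^ s" by (rule power_mult_distrib)
  have "(a ^ 4 ^ s) ^ 4 ^ s = a ^ (4 ^ s * 4 ^ s)" by (simp add: power_mult)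
  also have "(4::nat) ^ s * 4 ^ s = card (UNIV :: 'a set)" using card by (simp add: power_add[symmetric] mult_2)
  finally show "(a ^ 4 ^ s) ^ 4 ^ s = a" by (simp add: ff_power_card)
qed

lemma theta_nid:
  fixes dummy :: "'a :: {field,finite}"
  assumes card: "card (UNIV :: 'a set) = 4 ^ (2 * s)" and s: "s \<ge> 1"
  shows "\<exists>x::'a. x ^ (4 ^ s) \<noteq> x"
proof (rule ccontr)
  assume "\<not> (\<exists>x::'a. x ^ (4 ^ s) \<noteq> x)"
  then have all: "x ^ (4 ^ s) = x" for x :: 'a by blast
  define Q :: nat where "Q = 4 ^ s"
  have "(4::nat) ^ 1 \<le> 4 ^ s" by (rule power_increasing) (use s in auto)
  then have Q2: "Q \<ge> 2" by (simp add: Q_def)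
  define p :: "'a poly" where "p = monom 1 Q - monom 1 1"
  have cp: "coeff p Q = 1" using Q2 by (simp add: p_def coeff_monom)
  then have p0: "p \<noteq> 0" by auto
  have dp: "degree p = Q"
  proof (rule antisym)
    show "degree p \<le> Q" by (rule degree_le) (use Q2 in \<open>auto simp: p_def coeff_monom\<close>)
    show "Q \<le> degree p" by (rule le_degree) (simp add: cp)
  qed
  have "{x. poly p x = 0} = UNIV" using all by (auto simp: p_def poly_monom Q_def)
  then have "card (UNIV :: 'a set) \<le> Q" using card_poly_roots_bound[OF p0] dp by simp
  moreover have "card (UNIV :: 'a set) = Q * Q" using card by (simp add: Q_def power_mult power2_eq_square mult.commute)
  ultimately show False using Q2 by simp
qed

theorem theorem2:
  fixes s n :: nat and g :: "'a::{field,finite} poly" and \<theta> :: "'a \<Rightarrow> 'a"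
  assumes "s \<ge> 1"
    and "card (UNIV :: 'a set) = 4 ^ (2 * s)"
    and "\<theta> = (\<lambda>a. a ^ (4 ^ s))"
    and "even n" and "n > 0"
    and "skew_right_dvd \<theta> g (xn_minus_1 n)"
    and "odd (degree g)"
  shows "(theta_palindromic \<theta> g \<longrightarrow> reversible_DNA \<theta> (skew_code \<theta> n g))
       \<and> (reversible_DNA \<theta> (skew_code \<theta> n g) \<longrightarrow>
            (\<exists>g'. theta_palindromic \<theta> g' \<and> skew_code \<theta> n g' = skew_code \<theta> n g))"
proof -
  interpret invol \<theta>
    unfolding assms(3) by (rule theta_invol[OF assms(2) assms(1)])
  have nid: "\<exists>x. \<theta> x \<noteq> x"
    unfolding assms(3) by (rule theta_nid[OF assms(2) assms(1)])
  show ?thesis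
    using forward[OF assms(5) assms(4) assms(7)] converse[OF assms(5) assms(4) assms(7) assms(6) _ nid]
    by blast
qed

end
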